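(* Let $\Gamma=(a_1\to\dots\to a_m\to b_m\to\dots\to b_1\to a_1)$ be a closed polygonal curve in the plane such that (i) the vectors $a_i-b_i$, $i=1,\dots,m$, all have the same direction (it is allowed that $a_1=b_1$ or $a_m=b_m$); (ii) the euclidean lengths $|a_i-b_i|$ form a unimodal sequence, i.e. there is $j$ such that the sequence is non-decreasing for $1\le i\le j$ and non-increasing for $j\le i\le m$. Then $\mathcal{A}(\Gamma)\le\operatorname{area}(\operatorname{conv}(\Gamma))$.
   Context: For vectors $s=(s_1,s_2)$, $t=(t_1,t_2)$ let $s\vee t=s_1t_2-s_2t_1$. For a closed polygonal curve $\gamma=(v_1\to\dots\to v_n\to v_{n+1}=v_1)$, its enclosed area is $\mathcal{A}(\gamma)=\frac12\sum_{i=1}^n v_i\vee v_{i+1}$ (equivalently, the sum over regions of the complement of $\gamma$ of the winding number times the area). "Same direction" means positive multiples of one common nonzero vector. *)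

theory Defs
  imports "HOL-Analysis.Analysis"
begin

definition wedge :: "real \<times> real \<Rightarrow> real \<times> real \<Rightarrow> real" where
  "wedge s t = fst s * snd t - snd s * fst t"

definition poly_area :: "(real \<times> real) list \<Rightarrow> real" where
  "poly_area vs = (1/2) * (\<Sum>i<length vs. wedge (vs ! i) (vs ! ((i + 1) mod length vs)))"

definition poly_curve :: "(real \<times> real) list \<Rightarrow> (real \<times> real) set" where
  "poly_curve vs = (\<Union>i<length vs. closed_segment (vs ! i) (vs ! ((i + 1) mod length vs)))"

definition gamma_vertices :: "nat \<Rightarrow> (nat \<Rightarrow> real \<times> real) \<Rightarrow> (nat \<Rightarrow> real \<times> real) \<Rightarrow> (real \<times> real) list" where
  "gamma_vertices m a b = map a [1..<m+1] @ map b (rev [1..<m+1])"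

end

theory Submission
  imports Defs "HOL-Analysis.Analysis"
begin

definition lam :: "real \<Rightarrow> real \<Rightarrow> real \<Rightarrow> real" where
  "lam lo hi t = (if t \<le> lo then 1 else if hi \<le> t then 0 else (hi - t) / (hi - lo))"

lemma lam_integral:
  assumes "0 \<le> lo" "lo \<le> hi" "hi \<le> H"
  shows "(lam lo hi has_integral (lo + hi) / 2) {0..H}"
proof -
  have i1: "(lam lo hi has_integral lo) {0..lo}"
  proof -
    have c: "((\<lambda>t. 1::real) has_integral lo) {0..lo}"
      using has_integral_const_real[of "1::real" 0 lo] assms by simp
    show ?thesis
      by (rule has_integral_spike_finite[where S="{}", OF _ _ c]) (auto simp: lam_def)
  qed
  have i2: "(lam lo hi has_integral (hi - lo) / 2) {lo..hi}"
  proof (cases "lo = hi")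
    case True then show ?thesis by (simp add: has_integral_refl(2))
  next
    case False
    then have lt: "lo < hi" using assms by simp
    have "((\<lambda>t. (hi - t) / (hi - lo)) has_integral
           ((0 - (hi - hi)^2 / (2*(hi - lo))) - (0 - (hi - lo)^2 / (2*(hi - lo))))) {lo..hi}"
    proof (rule fundamental_theorem_of_calculus)
      show "lo \<le> hi" using lt by simp
      fix x assume "x \<in> {lo..hi}"
      define k where "k = 1 / (2*(hi - lo))"
      have "((\<lambda>t. 0 - k * (hi - t)^2) has_real_derivative (0 - k * (2 * (hi - x) * (0 - 1)))) (at x within {lo..hi})"
        by (auto intro!: derivative_eq_intros)
      moreover have "(0 - k * (2 * (hi - x) * (0 - 1))) = (hi - x) / (hi - lo)"
        using lt by (simp add: k_def field_simps)
      moreover have "(\<lambda>t. 0 - k * (hi - t)^2) = (\<lambda>t. 0 - (hi - t)^2 / (2*(hi - lo)))"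
        by (simp add: k_def)
      ultimately show "((\<lambda>t. 0 - (hi - t)^2 / (2*(hi - lo))) has_vector_derivative (hi - x) / (hi - lo)) (at x within {lo..hi})"
        unfolding has_real_derivative_iff_has_vector_derivative[symmetric] by simp
    qed
    moreover have "(0 - (hi - hi)^2 / (2*(hi - lo))) - (0 - (hi - lo)^2 / (2*(hi - lo))) = (hi - lo)/2"
      using lt by (simp add: field_simps power2_eq_square)
    ultimately have c: "((\<lambda>t. (hi - t) / (hi - lo)) has_integral (hi - lo)/2) {lo..hi}" by metis
    show ?thesis
      by (rule has_integral_spike_finite[where S="{}", OF _ _ c]) (use lt in \<open>auto simp: lam_def\<close>)
  qed
  have i3: "(lam lo hi has_integral 0) {hi..H}"
  proof -
    have c: "((\<lambda>t. 0::real) has_integral 0) {hi..H}" by simp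
    show ?thesis
      by (rule has_integral_spike_finite[where S="{hi}", OF _ _ c]) (use assms in \<open>auto simp: lam_def\<close>)
  qed
  have i12: "(lam lo hi has_integral lo + (hi - lo)/2) {0..hi}"
    by (rule has_integral_combine[OF _ _ i1 i2]) (use assms in auto)
  have "(lam lo hi has_integral lo + (hi - lo)/2 + 0) {0..H}"
    by (rule has_integral_combine[OF _ _ i12 i3]) (use assms in auto)
  moreover have "lo + (hi - lo)/2 + 0 = (lo + hi) / 2" by (simp add: field_simps)
  ultimately show ?thesis by metis
qed


lemma mono_chain:
  fixes Hh :: "nat \<Rightarrow> real"
  assumes mono: "\<And>i. 1 \<le> i \<Longrightarrow> i < n \<Longrightarrow> Hh i \<le> Hh (Suc i)"
    and "1 \<le> i" "i \<le> k" "k \<le> n"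
  shows "Hh i \<le> Hh k"
  using assms(3,4)
proof (induction k rule: dec_induct)
  case base then show ?case by simp
next
  case (step k)
  then show ?case using mono[of k] assms(2) by simp
qed

lemma walk:
  fixes G :: "real \<Rightarrow> real \<Rightarrow> bool" and X Hh :: "nat \<Rightarrow> real"
  assumes down: "\<And>x t t'. G x t \<Longrightarrow> 0 \<le> t' \<Longrightarrow> t' \<le> t \<Longrightarrow> G x t'"
    and conv: "\<And>x1 t1 x2 t2 u. G x1 t1 \<Longrightarrow> G x2 t2 \<Longrightarrow> 0 \<le> u \<Longrightarrow> u \<le> 1 \<Longrightarrow>
                 G ((1-u)*x1 + u*x2) ((1-u)*t1 + u*t2)"
    and bas: "\<And>i. 1 \<le> i \<Longrightarrow> i \<le> n \<Longrightarrow> G (X i) (Hh i)"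
    and mono: "\<And>i. 1 \<le> i \<Longrightarrow> i < n \<Longrightarrow> Hh i \<le> Hh (Suc i)"
    and n: "1 \<le> n" and t: "0 \<le> t" "t \<le> Hh n"
  shows "G (X 1 + (\<Sum>i=1..<n. (X (Suc i) - X i) *
            (1 - lam (min (Hh i) (Hh (Suc i))) (max (Hh i) (Hh (Suc i))) t))) t"
proof -
  let ?L = "\<lambda>i. lam (min (Hh i) (Hh (Suc i))) (max (Hh i) (Hh (Suc i))) t"
  have "k \<le> n \<longrightarrow> t \<le> Hh k \<longrightarrow> G (X 1 + (\<Sum>i=1..<k. (X (Suc i) - X i) * (1 - ?L i))) t" if "1 \<le> k" for k
    using that
  proof (induction k rule: nat_induct_at_least)
    case base
    then show ?case using down[OF bas[of 1]] t n by auto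
  next
    case (Suc k)
    show ?case
    proof (intro impI)
      assume kn: "Suc k \<le> n" and tk: "t \<le> Hh (Suc k)"
      have step: "1 \<le> k" "k < n" "k \<le> n \<longrightarrow> t \<le> Hh k \<longrightarrow> G (X 1 + (\<Sum>i=1..<k. (X (Suc i) - X i) * (1 - ?L i))) t"
        using Suc kn by auto
      have mk: "Hh k \<le> Hh (Suc k)" using mono[of k] step by simp
      have split: "(\<Sum>i=1..<Suc k. (X (Suc i) - X i) * (1 - ?L i)) =
          (\<Sum>i=1..<k. (X (Suc i) - X i) * (1 - ?L i)) + (X (Suc k) - X k) * (1 - ?L k)"
        using step by simp
      show "G (X 1 + (\<Sum>i=1..<Suc k. (X (Suc i) - X i) * (1 - ?L i))) t"
      proof (cases "t \<le> Hh k")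
        case True
        then have "?L k = 1" using mk by (simp add: lam_def)
        then show ?thesis using step True split by simp
      next
        case False
        have L0: "?L i = 0" if "i \<in> {1..<k}" for i
        proof -
          have "Hh i \<le> Hh (Suc i)" "Hh (Suc i) \<le> Hh k"
            using mono[of i] mono_chain[of n Hh "Suc i" k, OF mono] that step by auto
          then show ?thesis using False by (simp add: lam_def)
        qed
        have "(\<Sum>i=1..<k. (X (Suc i) - X i) * (1 - ?L i)) = (\<Sum>i=1..<k. X (Suc i) - X i)"
          using L0 by (intro sum.cong) auto
        also have "\<dots> = X k - X 1" using step by (simp add: sum_Suc_diff')
        finally have S: "X 1 + (\<Sum>i=1..<Suc k. (X (Suc i) - X i) * (1 - ?L i))
            = (1 - (1 - ?L k)) * X k + (1 - ?L k) * X (Suc k)"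
          using split by (simp add: algebra_simps)
        have lo: "min (Hh k) (Hh (Suc k)) = Hh k" and hi: "max (Hh k) (Hh (Suc k)) = Hh (Suc k)"
          using mk by auto
        have Lk0: "?L k = lam (Hh k) (Hh (Suc k)) t" by (simp only: lo hi)
        have Lk1: "lam (Hh k) (Hh (Suc k)) t = (if Hh (Suc k) \<le> t then 0 else (Hh (Suc k) - t) / (Hh (Suc k) - Hh k))"
          using False by (simp add: lam_def)
        have Lk: "?L k = (if Hh (Suc k) \<le> t then 0 else (Hh (Suc k) - t) / (Hh (Suc k) - Hh k))"
          using Lk0 Lk1 by simp
        have u01: "0 \<le> 1 - ?L k" "1 - ?L k \<le> 1"
          using False tk unfolding Lk by (auto simp: field_simps)
        have ht: "(1 - (1 - ?L k)) * Hh k + (1 - ?L k) * Hh (Suc k) = t"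
          using False tk unfolding Lk by (auto simp: field_simps)
        have "G ((1 - (1 - ?L k)) * X k + (1 - ?L k) * X (Suc k))
                ((1 - (1 - ?L k)) * Hh k + (1 - ?L k) * Hh (Suc k))"
          by (rule conv[OF bas bas u01]) (use step in auto)
        then show ?thesis using S ht by simp
      qed
    qed
  qed
  then show ?thesis using t n by simp
qed


fun psum :: "(real \<times> real) list \<Rightarrow> real" where
  "psum [] = 0"
| "psum [x] = 0"
| "psum (x # y # zs) = wedge x y + psum (y # zs)"

lemma psum_nth: "psum vs = (\<Sum>i<length vs - 1. wedge (vs ! i) (vs ! Suc i))"
proof (induction vs rule: psum.induct)
  case (3 x y zs)
  have "(\<Sum>i<length (x # y # zs) - 1. wedge ((x # y # zs) ! i) ((x # y # zs) ! Suc i))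
      = wedge x y + (\<Sum>i<length (y # zs) - 1. wedge ((y # zs) ! i) ((y # zs) ! Suc i))"
    by (simp only: length_Cons diff_Suc_1 sum.lessThan_Suc_shift) simp
  then show ?case using 3 by simp
qed auto

lemma wedge_anti: "wedge x y = - wedge y x"
  by (simp add: wedge_def)

lemma psum_cyc:
  assumes "vs \<noteq> []"
  shows "(\<Sum>i<length vs. wedge (vs ! i) (vs ! ((i + 1) mod length vs))) = psum vs + wedge (last vs) (hd vs)"
proof -
  obtain n where n: "length vs = Suc n" using assms by (cases vs) auto
  have "(\<Sum>i<length vs. wedge (vs ! i) (vs ! ((i + 1) mod length vs)))
      = (\<Sum>i<n. wedge (vs ! i) (vs ! ((i + 1) mod length vs))) + wedge (vs ! n) (vs ! ((n+1) mod length vs))"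
    by (simp add: n)
  also have "(\<Sum>i<n. wedge (vs ! i) (vs ! ((i + 1) mod length vs))) = (\<Sum>i<n. wedge (vs ! i) (vs ! Suc i))"
    by (intro sum.cong) (auto simp: n)
  also have "\<dots> = psum vs" by (simp add: psum_nth n)
  also have "wedge (vs ! n) (vs ! ((n+1) mod length vs)) = wedge (last vs) (hd vs)"
    using assms by (simp add: n last_conv_nth hd_conv_nth)
  finally show ?thesis .
qed

lemma psum_append:
  "xs \<noteq> [] \<Longrightarrow> ys \<noteq> [] \<Longrightarrow> psum (xs @ ys) = psum xs + wedge (last xs) (hd ys) + psum ys"
proof (induction xs rule: psum.induct)
  case (2 x)
  then show ?case by (cases ys) auto
qed auto

lemma psum_rev: "psum (rev xs) = - psum xs"
proof (induction xs rule: psum.induct)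
  case (3 x y zs)
  have "psum (rev (x # y # zs)) = psum (rev (y # zs) @ [x])" by simp
  also have "\<dots> = psum (rev (y # zs)) + wedge y x"
    by (subst psum_append) (auto simp: last_rev)
  finally show ?case using 3 by (simp add: wedge_anti[of y x])
qed auto

lemma psum_map_upt:
  assumes "1 \<le> m"
  shows "psum (map a [1..<Suc m]) = (\<Sum>i=1..<m. wedge (a i) (a (Suc i)))"
  using assms
proof (induction m rule: nat_induct_at_least)
  case (Suc m)
  have "psum (map a [1..<Suc (Suc m)]) = psum (map a [1..<Suc m] @ [a (Suc m)])" by simp
  also have "\<dots> = psum (map a [1..<Suc m]) + wedge (a m) (a (Suc m))"
    using Suc by (subst psum_append) (auto simp: last_map)
  finally show ?case using Suc by simp
qed simp

lemma area_formula:
  assumes "1 \<le> m"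
  shows "2 * poly_area (gamma_vertices m a b) =
    (\<Sum>i=1..<m. wedge (a i) (a (Suc i)) - wedge (b i) (b (Suc i))) + wedge (a m) (b m) + wedge (b 1) (a 1)"
proof -
  let ?A = "map a [1..<Suc m]" and ?B = "map b [1..<Suc m]"
  have gv: "gamma_vertices m a b = ?A @ rev ?B"
    by (simp add: gamma_vertices_def rev_map)
  have ne: "?A \<noteq> []" "rev ?B \<noteq> []" using assms by auto
  have la: "last ?A = a m" using assms by (simp add: last_map)
  have hb: "hd (rev ?B) = b m" using assms by (simp add: hd_rev last_map)
  have lb: "last (?A @ rev ?B) = b 1" using assms by (simp add: last_rev hd_map)
  have "?A = a 1 # map a [Suc 1..<Suc m]" using assms by (simp add: upt_conv_Cons del: upt_Suc)
  then have ha: "hd (?A @ rev ?B) = a 1" by (simp del: upt_Suc)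
  have "2 * poly_area (gamma_vertices m a b) = psum (?A @ rev ?B) + wedge (b 1) (a 1)"
    unfolding poly_area_def gv using psum_cyc[of "?A @ rev ?B"] lb ha ne by simp
  also have "psum (?A @ rev ?B) = psum ?A + wedge (a m) (b m) - psum ?B"
    using psum_append[OF ne] la hb psum_rev[of ?B] by simp
  finally show ?thesis
    using psum_map_upt[OF assms, of a] psum_map_upt[OF assms, of b] by (simp add: sum_subtractf)
qed

lemma vertical_area:
  fixes x y c :: "nat \<Rightarrow> real"
  assumes "1 \<le> m"
    and ab: "\<And>i. 1 \<le> i \<Longrightarrow> i \<le> m \<Longrightarrow> a i = (x i, y i + c i) \<and> b i = (x i, y i)"
  shows "(\<Sum>i=1..<m. wedge (a i) (a (Suc i)) - wedge (b i) (b (Suc i))) + wedge (a m) (b m) + wedge (b 1) (a 1)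
       = (\<Sum>i=1..<m. (x i - x (Suc i)) * (c i + c (Suc i)))"
  using assms
proof (induction m rule: nat_induct_at_least)
  case base
  then show ?case using base.prems[of 1] by (simp add: wedge_def algebra_simps)
next
  case (Suc m)
  have IH: "(\<Sum>i=1..<m. wedge (a i) (a (Suc i)) - wedge (b i) (b (Suc i))) + wedge (a m) (b m) + wedge (b 1) (a 1)
       = (\<Sum>i=1..<m. (x i - x (Suc i)) * (c i + c (Suc i)))"
    using Suc by auto
  have am: "a m = (x m, y m + c m)" "b m = (x m, y m)" using Suc.prems(1)[of m] Suc.hyps by auto
  have am1: "a (Suc m) = (x (Suc m), y (Suc m) + c (Suc m))" "b (Suc m) = (x (Suc m), y (Suc m))"
    using Suc.prems(1)[of "Suc m"] by auto
  show ?case using IH Suc.hyps am am1 by (simp add: wedge_def algebra_simps)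
qed



lemma slice_compact:
  fixes K :: "(real \<times> real) set"
  assumes "compact K"
  shows "compact (Pair x -` K)"
proof -
  have "Pair x -` K = snd ` (K \<inter> ({x} \<times> UNIV))" by (auto intro: rev_image_eqI)
  moreover have "compact (K \<inter> ({x} \<times> UNIV))"
    by (intro compact_Int_closed assms closed_Times) auto
  ultimately show ?thesis
    using compact_continuous_image[OF continuous_on_snd[OF continuous_on_id]] by metis
qed

lemma slice_bound:
  fixes K :: "(real \<times> real) set"
  assumes K: "compact K" "convex K" and xy: "(x, y0) \<in> K" "(x, y0 + t) \<in> K" and t: "0 \<le> t"
  shows "t \<le> measure lborel (Pair x -` K)"
proof -
  have sub: "{y0..y0+t} \<subseteq> Pair x -` K"
  proof
    fix y assume y: "y \<in> {y0..y0+t}"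
    show "y \<in> Pair x -` K"
    proof (cases "t = 0")
      case True then show ?thesis using y xy by auto
    next
      case False
      define u where "u = (y - y0) / t"
      have u: "0 \<le> u" "u \<le> 1" using y t False by (auto simp: u_def field_simps)
      have "(1 - u) *\<^sub>R (x, y0) + u *\<^sub>R (x, y0 + t) \<in> K"
        using convexD_alt[OF K(2) xy(1) xy(2) u(1) u(2)] by simp
      moreover have "(1 - u) * y0 + u * (y0 + t) = y"
        using False unfolding u_def by (simp add: divide_simps) argo
      then have "(1 - u) *\<^sub>R (x, y0) + u *\<^sub>R (x, y0 + t) = (x, y)"
        by (simp add: algebra_simps)
      ultimately show ?thesis by (simp add: \<open>(1 - u) *\<^sub>R (x, y0) + u *\<^sub>R (x, y0 + t) = (x, y)\<close>)
    qed
  qed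
  have cs: "compact (Pair x -` K)" by (rule slice_compact[OF K(1)])
  have "Pair x -` K \<in> fmeasurable lborel"
    using cs emeasure_bounded_finite[OF compact_imp_bounded[OF cs]]
    by (intro fmeasurableI) (auto simp: borel_compact infinity_ennreal_def)
  then have "measure lborel {y0..y0+t} \<le> measure lborel (Pair x -` K)"
    by (intro measure_mono_fmeasurable[OF sub]) auto
  then show ?thesis using t by simp
qed

lemma convexD_alt': "convex s \<Longrightarrow> a \<in> s \<Longrightarrow> b \<in> s \<Longrightarrow> 0 \<le> u \<Longrightarrow> u \<le> 1 \<Longrightarrow> (1 - u) *\<^sub>R a + u *\<^sub>R b \<in> s"
  by (rule convexD_alt)

lemma measure_via_slices:
  fixes K :: "(real \<times> real) set" and P Q :: "real \<Rightarrow> real"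
  assumes K: "compact K" "convex K"
    and Pm: "P \<in> borel_measurable borel" and Qm: "Q \<in> borel_measurable borel"
    and good: "\<And>t x. 0 \<le> t \<Longrightarrow> t \<le> H \<Longrightarrow> Q t \<le> x \<Longrightarrow> x \<le> P t \<Longrightarrow> \<exists>y0. (x, y0) \<in> K \<and> (x, y0 + t) \<in> K"
  shows "(\<integral>\<^sup>+t. ennreal (if t \<in> {0..H} then P t - Q t else 0) \<partial>lborel) \<le> emeasure lborel K"
proof -
  define Z where "Z = {p::real\<times>real. 0 \<le> fst p \<and> fst p \<le> H \<and> Q (fst p) \<le> snd p \<and> snd p \<le> P (fst p)}"
  have "{p \<in> space (borel \<Otimes>\<^sub>M borel). 0 \<le> fst p \<and> fst p \<le> H \<and> Q (fst p) \<le> snd p \<and> snd p \<le> (P (fst p)::real)} \<in> sets (borel \<Otimes>\<^sub>M borel)"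
    using Pm Qm by measurable
  then have Zm: "Z \<in> sets (lborel \<Otimes>\<^sub>M lborel)"
    unfolding Z_def by (simp add: space_pair_measure)
  have Km: "K \<in> sets (lborel \<Otimes>\<^sub>M lborel)"
    using K by (simp only: lborel_prod sets_lborel) (simp add: borel_compact)
  have "(\<integral>\<^sup>+t. ennreal (if t \<in> {0..H} then P t - Q t else 0) \<partial>lborel)
      = (\<integral>\<^sup>+t. emeasure lborel (Pair t -` Z) \<partial>lborel)"
  proof (intro nn_integral_cong)
    fix t :: real
    show "ennreal (if t \<in> {0..H} then P t - Q t else 0) = emeasure lborel (Pair t -` Z)"
    proof (cases "t \<in> {0..H} \<and> Q t \<le> P t")
      case True
      then have "Pair t -` Z = {Q t..P t}" by (auto simp: Z_def)
      then show ?thesis using True by simp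
    next
      case False
      then have "Pair t -` Z = {}" by (auto simp: Z_def)
      then show ?thesis using False by (auto simp: ennreal_neg)
    qed
  qed
  also have "\<dots> = emeasure (lborel \<Otimes>\<^sub>M lborel) Z"
    by (rule lborel.emeasure_pair_measure_alt[symmetric, OF Zm])
  also have "\<dots> = (\<integral>\<^sup>+x. emeasure lborel ((\<lambda>t. (t, x)) -` Z) \<partial>lborel)"
    by (rule lborel_pair.emeasure_pair_measure_alt2[OF Zm])
  also have "\<dots> \<le> (\<integral>\<^sup>+x. emeasure lborel (Pair x -` K) \<partial>lborel)"
  proof (intro nn_integral_mono)
    fix x :: real
    let ?S = "Pair x -` K"
    have cs: "compact ?S" by (rule slice_compact[OF K(1)])
    have fin: "emeasure lborel ?S \<noteq> top"
      using emeasure_bounded_finite[OF compact_imp_bounded[OF cs]] by (simp add: infinity_ennreal_def)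
    have sub: "(\<lambda>t. (t, x)) -` Z \<subseteq> {0..measure lborel ?S}"
    proof
      fix t assume "t \<in> (\<lambda>t. (t, x)) -` Z"
      then have t: "0 \<le> t" "t \<le> H" "Q t \<le> x" "x \<le> P t" by (auto simp: Z_def)
      obtain y0 where "(x, y0) \<in> K" "(x, y0 + t) \<in> K" using good[OF t] by blast
      then have "t \<le> measure lborel ?S" using slice_bound[OF K] t(1) by blast
      then show "t \<in> {0..measure lborel ?S}" using t by simp
    qed
    have "emeasure lborel ((\<lambda>t. (t, x)) -` Z) \<le> emeasure lborel {0..measure lborel ?S}"
      by (intro emeasure_mono[OF sub]) simp
    also have "\<dots> = emeasure lborel ?S"
      using emeasure_eq_ennreal_measure[OF fin] by simp
    finally show "emeasure lborel ((\<lambda>t. (t, x)) -` Z) \<le> emeasure lborel ?S" .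
  qed
  also have "\<dots> = emeasure (lborel \<Otimes>\<^sub>M lborel) K"
    by (rule lborel.emeasure_pair_measure_alt[symmetric, OF Km])
  also have "\<dots> = emeasure lborel K" by (simp add: lborel_prod)
  finally show ?thesis .
qed

lemma ennreal_integral_le_nn:
  fixes g :: "real \<Rightarrow> real"
  assumes "integrable lborel g"
  shows "ennreal (integral\<^sup>L lborel g) \<le> (\<integral>\<^sup>+t. ennreal (g t) \<partial>lborel)"
proof -
  have i2: "integrable lborel (\<lambda>t. max 0 (g t))" using assms by auto
  have "integral\<^sup>L lborel g \<le> integral\<^sup>L lborel (\<lambda>t. max 0 (g t))"
    by (intro integral_mono assms i2) auto
  then have "ennreal (integral\<^sup>L lborel g) \<le> ennreal (integral\<^sup>L lborel (\<lambda>t. max 0 (g t)))"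
    by (rule ennreal_leI)
  also have "\<dots> = (\<integral>\<^sup>+t. ennreal (max 0 (g t)) \<partial>lborel)"
    by (rule nn_integral_eq_integral[symmetric, OF i2]) auto
  also have "\<dots> = (\<integral>\<^sup>+t. ennreal (g t) \<partial>lborel)" by (simp add: ennreal_max_0)
  finally show ?thesis .
qed




lemma cont_vimage_borel:
  fixes f :: "'a::topological_space \<Rightarrow> 'b::topological_space"
  assumes "continuous_on UNIV f" "C \<in> sets borel"
  shows "f -` C \<in> sets borel"
  using measurable_sets[OF borel_measurable_continuous_onI[OF assms(1)] assms(2)] by simp

lemma translate_vimage_emeasure:
  fixes A :: "real set" and c :: real
  assumes "A \<in> sets borel"
  shows "emeasure lborel ((\<lambda>y. y + c) -` A) = emeasure lborel A"
proof -
  have "emeasure (distr lborel borel ((+) c)) A = emeasure lborel ((+) c -` A \<inter> space lborel)"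
    using assms by (intro emeasure_distr) auto
  moreover have "(+) c -` A \<inter> space lborel = (\<lambda>y. y + c) -` A" by (auto simp: add.commute)
  ultimately show ?thesis by (simp add: lborel_distr_plus)
qed

lemma shear_v_emeasure:
  fixes C :: "(real \<times> real) set"
  assumes C: "C \<in> sets borel"
  shows "emeasure lborel ((\<lambda>p. (fst p, snd p + k * fst p)) -` C) = emeasure lborel C"
proof -
  let ?g = "\<lambda>p::real\<times>real. (fst p, snd p + k * fst p)"
  have G: "?g -` C \<in> sets borel"
    by (intro cont_vimage_borel C continuous_intros)
  have sl: "Pair x -` (?g -` C) = (\<lambda>y. y + k * x) -` (Pair x -` C)" for x
    by auto
  have Cs: "Pair x -` C \<in> sets borel" for x
  proof -
    have "(\<lambda>y. (x, y)) -` C \<in> sets borel" by (intro cont_vimage_borel C continuous_intros)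
    moreover have "Pair x -` C = (\<lambda>y. (x, y)) -` C" by auto
    ultimately show ?thesis by simp
  qed
  have "emeasure lborel (?g -` C) = emeasure (lborel \<Otimes>\<^sub>M lborel) (?g -` C)"
    by (simp add: lborel_prod)
  also have "\<dots> = (\<integral>\<^sup>+x. emeasure lborel (Pair x -` (?g -` C)) \<partial>lborel)"
    using G by (intro lborel.emeasure_pair_measure_alt) (simp only: lborel_prod sets_lborel)
  also have "\<dots> = (\<integral>\<^sup>+x. emeasure lborel (Pair x -` C) \<partial>lborel)"
    unfolding sl using Cs translate_vimage_emeasure by simp
  also have "\<dots> = emeasure (lborel \<Otimes>\<^sub>M lborel) C"
    using C by (intro lborel.emeasure_pair_measure_alt[symmetric]) (simp only: lborel_prod sets_lborel)
  also have "\<dots> = emeasure lborel C" by (simp add: lborel_prod)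
  finally show ?thesis .
qed

lemma shear_h_emeasure:
  fixes C :: "(real \<times> real) set"
  assumes C: "C \<in> sets borel"
  shows "emeasure lborel ((\<lambda>p. (fst p + k * snd p, snd p)) -` C) = emeasure lborel C"
proof -
  let ?g = "\<lambda>p::real\<times>real. (fst p + k * snd p, snd p)"
  have G: "?g -` C \<in> sets borel"
    by (intro cont_vimage_borel C continuous_intros)
  have sl: "(\<lambda>x. (x, y)) -` (?g -` C) = (\<lambda>x. x + k * y) -` ((\<lambda>x. (x, y)) -` C)" for y
    by auto
  have Cs: "(\<lambda>x. (x, y)) -` C \<in> sets borel" for y
    by (intro cont_vimage_borel C continuous_intros)
  have "emeasure lborel (?g -` C) = emeasure (lborel \<Otimes>\<^sub>M lborel) (?g -` C)"
    by (simp add: lborel_prod)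
  also have "\<dots> = (\<integral>\<^sup>+y. emeasure lborel ((\<lambda>x. (x, y)) -` (?g -` C)) \<partial>lborel)"
    using G by (intro lborel_pair.emeasure_pair_measure_alt2) (simp only: lborel_prod sets_lborel)
  also have "\<dots> = (\<integral>\<^sup>+y. emeasure lborel ((\<lambda>x. (x, y)) -` C) \<partial>lborel)"
    unfolding sl using Cs translate_vimage_emeasure by simp
  also have "\<dots> = emeasure (lborel \<Otimes>\<^sub>M lborel) C"
    using C by (intro lborel_pair.emeasure_pair_measure_alt2[symmetric]) (simp only: lborel_prod sets_lborel)
  also have "\<dots> = emeasure lborel C" by (simp add: lborel_prod)
  finally show ?thesis .
qed

lemma measure_lebesgue_eq_lborel:
  fixes C :: "'a::euclidean_space set"
  assumes "C \<in> sets borel"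
  shows "measure lebesgue C = measure lborel C"
  using assms by simp

lemma shear_v_measure:
  fixes C :: "(real \<times> real) set"
  assumes "compact C"
  shows "measure lebesgue ((\<lambda>p. (fst p, snd p + k * fst p)) ` C) = measure lebesgue C"
proof -
  have e: "(\<lambda>p. (fst p, snd p + k * fst p)) ` C = (\<lambda>p. (fst p, snd p + (-k) * fst p)) -` C"
    by (auto simp: image_iff) (metis add_diff_cancel diff_conv_add_uminus fst_conv mult_minus_left prod.collapse snd_conv)
  have C: "C \<in> sets borel" using assms by (simp add: borel_compact)
  then have "(\<lambda>p. (fst p, snd p + (-k) * fst p)) -` C \<in> sets borel"
    by (intro cont_vimage_borel continuous_intros)
  then show ?thesis
    unfolding e using C shear_v_emeasure[OF C, of "-k"] by (simp add: measure_def)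
qed

lemma shear_h_measure:
  fixes C :: "(real \<times> real) set"
  assumes "compact C"
  shows "measure lebesgue ((\<lambda>p. (fst p + k * snd p, snd p)) ` C) = measure lebesgue C"
proof -
  have e: "(\<lambda>p. (fst p + k * snd p, snd p)) ` C = (\<lambda>p. (fst p + (-k) * snd p, snd p)) -` C"
    by (auto simp: image_iff) (metis add_diff_cancel diff_conv_add_uminus fst_conv mult_minus_left prod.collapse snd_conv)
  have C: "C \<in> sets borel" using assms by (simp add: borel_compact)
  then have "(\<lambda>p. (fst p + (-k) * snd p, snd p)) -` C \<in> sets borel"
    by (intro cont_vimage_borel continuous_intros)
  then show ?thesis
    unfolding e using C shear_h_emeasure[OF C, of "-k"] by (simp add: measure_def)
qed


definition Concl :: "nat \<Rightarrow> (nat \<Rightarrow> real \<times> real) \<Rightarrow> (nat \<Rightarrow> real \<times> real) \<Rightarrow> bool" where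
  "Concl m a b \<longleftrightarrow> poly_area (gamma_vertices m a b)
           \<le> measure lebesgue (convex hull (poly_curve (gamma_vertices m a b)))"

definition HYP :: "nat \<Rightarrow> (nat \<Rightarrow> real \<times> real) \<Rightarrow> (nat \<Rightarrow> real \<times> real) \<Rightarrow> real \<times> real \<Rightarrow> (nat \<Rightarrow> real) \<Rightarrow> bool" where
  "HYP m a b d c \<longleftrightarrow> d \<noteq> 0 \<and> (\<forall>i\<in>{1..m}. a i - b i = c i *\<^sub>R d \<and> 0 \<le> c i) \<and>
     (\<exists>j\<in>{1..m}. (\<forall>i k. 1 \<le> i \<and> i \<le> k \<and> k \<le> j \<longrightarrow> c i \<le> c k) \<and>
                 (\<forall>i k. j \<le> i \<and> i \<le> k \<and> k \<le> m \<longrightarrow> c k \<le> c i))"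

lemma poly_area_map:
  assumes "\<And>p q. wedge (f p) (f q) = wedge p q"
  shows "poly_area (map f vs) = poly_area vs"
proof -
  have "wedge (map f vs ! i) (map f vs ! ((i + 1) mod length vs)) = wedge (vs ! i) (vs ! ((i + 1) mod length vs))"
    if "i < length vs" for i
  proof -
    have "(i + 1) mod length vs < length vs" using that by (intro mod_less_divisor) (cases vs, auto)
    then show ?thesis using that by (simp add: assms)
  qed
  then show ?thesis unfolding poly_area_def by (auto intro!: sum.cong)
qed

lemma poly_curve_map:
  assumes "linear f"
  shows "poly_curve (map f vs) = f ` poly_curve vs"
proof -
  have "closed_segment (map f vs ! i) (map f vs ! ((i + 1) mod length vs)) = f ` closed_segment (vs ! i) (vs ! ((i + 1) mod length vs))"
    if "i < length vs" for i
  proof -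
    have "(i + 1) mod length vs < length vs" using that by (intro mod_less_divisor) (cases vs, auto)
    then show ?thesis using that by (simp add: closed_segment_linear_image[OF assms])
  qed
  then show ?thesis unfolding poly_curve_def image_UN by (auto intro!: SUP_cong)
qed

lemma compact_poly_curve: "compact (poly_curve vs)"
  unfolding poly_curve_def by (intro compact_UN) auto

lemma gamma_map: "gamma_vertices m (f \<circ> a) (f \<circ> b) = map f (gamma_vertices m a b)"
  by (simp add: gamma_vertices_def)

lemma transfer:
  assumes lin: "linear f"
    and w: "\<And>p q. wedge (f p) (f q) = wedge p q"
    and meas: "\<And>C. compact C \<Longrightarrow> measure lebesgue (f ` C) = measure lebesgue C"
    and c: "Concl m (f \<circ> a) (f \<circ> b)"
  shows "Concl m a b"
proof -
  let ?v = "gamma_vertices m a b"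
  have "poly_area ?v = poly_area (gamma_vertices m (f \<circ> a) (f \<circ> b))"
    by (simp add: gamma_map poly_area_map w)
  also have "\<dots> \<le> measure lebesgue (convex hull (poly_curve (gamma_vertices m (f \<circ> a) (f \<circ> b))))"
    using c by (simp add: Concl_def)
  also have "convex hull (poly_curve (gamma_vertices m (f \<circ> a) (f \<circ> b))) = f ` (convex hull (poly_curve ?v))"
    by (simp add: gamma_map poly_curve_map[OF lin] convex_hull_linear_image[OF lin])
  also have "measure lebesgue (f ` (convex hull (poly_curve ?v))) = measure lebesgue (convex hull (poly_curve ?v))"
    by (intro meas compact_convex_hull compact_poly_curve)
  finally show ?thesis by (simp add: Concl_def)
qed

lemma hyp_transfer:
  assumes lin: "linear f" and fd: "f d \<noteq> 0" and h: "HYP m a b d c"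
  shows "HYP m (f \<circ> a) (f \<circ> b) (f d) c"
  using h fd unfolding HYP_def
  by (auto simp: linear_diff[OF lin, symmetric] linear_cmul[OF lin, symmetric])

lemma lam_bounds: "lo \<le> hi \<Longrightarrow> 0 \<le> lam lo hi t \<and> lam lo hi t \<le> 1"
  by (auto simp: lam_def field_simps)

lemma lam_measurable[measurable]: "lam lo hi \<in> borel_measurable borel"
  unfolding lam_def by measurable

lemma vert_main:
  assumes m: "1 \<le> m" and h: "HYP m a b (0, 1) c"
  shows "Concl m a b"
proof -
  from h obtain j where j: "j \<in> {1..m}"
    and up: "\<forall>i k. 1 \<le> i \<and> i \<le> k \<and> k \<le> j \<longrightarrow> c i \<le> c k"
    and dn: "\<forall>i k. j \<le> i \<and> i \<le> k \<and> k \<le> m \<longrightarrow> c k \<le> c i"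
    and ab: "\<forall>i\<in>{1..m}. a i - b i = c i *\<^sub>R (0, 1) \<and> 0 \<le> c i"
    unfolding HYP_def by blast
  define x where "x i = fst (b i)" for i
  define y where "y i = snd (b i)" for i
  have abx: "a i = (x i, y i + c i) \<and> b i = (x i, y i)" if "1 \<le> i" "i \<le> m" for i
  proof -
    have "a i - b i = (0, c i)" using ab that by simp
    then have "fst (a i) = fst (b i)" "snd (a i) = snd (b i) + c i"
      by (metis add_diff_cancel_left' diff_add_cancel fst_diff fst_conv add.right_neutral,
          metis diff_add_cancel snd_diff snd_conv add.commute)
    then show ?thesis by (simp add: x_def y_def prod_eq_iff)
  qed
  have c0: "0 \<le> c i" if "1 \<le> i" "i \<le> m" for i using ab that by simp
  have cmax: "c i \<le> c j" if "1 \<le> i" "i \<le> m" for i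
  proof (cases "i \<le> j")
    case True then show ?thesis using up[rule_format, of i j] that by blast
  next
    case False then show ?thesis using dn[rule_format, of j i] that by simp
  qed
  define vs where "vs = gamma_vertices m a b"
  define K where "K = convex hull (poly_curve vs)"
  have Kc: "compact K" unfolding K_def by (intro compact_convex_hull compact_poly_curve)
  have Kv: "convex K" unfolding K_def by simp
  have setvs: "set vs = a ` {1..m} \<union> b ` {1..m}"
  proof -
    have e: "{1..<m+1} = {1..m::nat}" by auto
    show ?thesis unfolding vs_def gamma_vertices_def set_append set_map set_rev set_upt e by (rule refl)
  qed
  have "set vs \<subseteq> poly_curve vs"
  proof
    fix v assume "v \<in> set vs"
    then obtain i where i: "i < length vs" "vs ! i = v" by (metis in_set_conv_nth)
    have "vs ! i \<in> closed_segment (vs ! i) (vs ! ((i + 1) mod length vs))" by (rule ends_in_segment(1))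
    then have "v \<in> closed_segment (vs ! i) (vs ! ((i + 1) mod length vs))" using i(2) by simp
    then show "v \<in> poly_curve vs" unfolding poly_curve_def by (rule UN_I[rotated]) (use i(1) in simp)
  qed
  then have vK: "set vs \<subseteq> K" unfolding K_def by (rule subset_trans[OF _ hull_subset])
  have aK: "a i \<in> K" and bK: "b i \<in> K" if "1 \<le> i" "i \<le> m" for i
  proof -
    have "i \<in> {1..m}" using that by simp
    then have "a i \<in> set vs" "b i \<in> set vs" unfolding setvs by (blast intro: imageI)+
    then show "a i \<in> K" "b i \<in> K" using vK by blast+
  qed
  define G where "G xx t \<longleftrightarrow> (\<exists>y0. (xx, y0) \<in> K \<and> (xx, y0 + t) \<in> K)" for xx t
  have down: "G xx t'" if g: "G xx t" "0 \<le> t'" "t' \<le> t" for xx t t'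
  proof -
    obtain y0 where y0: "(xx, y0) \<in> K" "(xx, y0 + t) \<in> K" using g(1) unfolding G_def by blast
    show ?thesis
    proof (cases "t = 0")
      case True then show ?thesis using g y0 by (auto simp: G_def intro!: exI[of _ y0])
    next
      case False
      define u where "u = t' / t"
      have tp: "0 < t" using g False by simp
      have u: "0 \<le> u" "u \<le> 1" using g tp by (auto simp: u_def divide_le_eq_1)
      have "(1 - u) *\<^sub>R (xx, y0) + u *\<^sub>R (xx, y0 + t) \<in> K"
        by (rule convexD_alt[OF Kv y0 u])
      moreover have "(1 - u) * y0 + u * (y0 + t) = y0 + t'"
        using tp unfolding u_def by (simp add: field_simps)
      moreover have "(1 - u) *\<^sub>R (xx, y0) + u *\<^sub>R (xx, y0 + t) = (xx, (1 - u) * y0 + u * (y0 + t))"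
        by (simp add: algebra_simps)
      ultimately have "(xx, y0 + t') \<in> K" by simp
      then show ?thesis using y0 by (auto simp: G_def)
    qed
  qed
  have conv: "G ((1-u)*x1 + u*x2) ((1-u)*t1 + u*t2)"
    if g: "G x1 t1" "G x2 t2" "0 \<le> u" "u \<le> 1" for x1 t1 x2 t2 u
  proof -
    obtain y1 where y1: "(x1, y1) \<in> K" "(x1, y1 + t1) \<in> K" using g(1) unfolding G_def by blast
    obtain y2 where y2: "(x2, y2) \<in> K" "(x2, y2 + t2) \<in> K" using g(2) unfolding G_def by blast
    have "(1 - u) *\<^sub>R (x1, y1) + u *\<^sub>R (x2, y2) \<in> K"
      by (rule convexD_alt[OF Kv y1(1) y2(1) g(3,4)])
    moreover have "(1 - u) *\<^sub>R (x1, y1 + t1) + u *\<^sub>R (x2, y2 + t2) \<in> K"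
      by (rule convexD_alt[OF Kv y1(2) y2(2) g(3,4)])
    moreover have "(1 - u) *\<^sub>R (x1, y1) + u *\<^sub>R (x2, y2) = ((1-u)*x1 + u*x2, (1-u)*y1 + u*y2)"
      by simp
    moreover have "(1 - u) *\<^sub>R (x1, y1 + t1) + u *\<^sub>R (x2, y2 + t2) = ((1-u)*x1 + u*x2, ((1-u)*y1 + u*y2) + ((1-u)*t1 + u*t2))"
      by (simp add: algebra_simps)
    ultimately show ?thesis unfolding G_def
      by (intro exI[of _ "(1-u)*y1 + u*y2"]) simp
  qed
  have base: "G (x i) (c i)" if "1 \<le> i" "i \<le> m" for i
    using aK[OF that] bK[OF that] abx[OF that] unfolding G_def by (intro exI[of _ "y i"]) simp
  define L where "L i t = lam (min (c i) (c (Suc i))) (max (c i) (c (Suc i))) t" for i t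
  define P where "P t = x 1 + (\<Sum>i=1..<j. (x (Suc i) - x i) * (1 - L i t))" for t
  define Q where "Q t = x m + (\<Sum>i=j..<m. (x i - x (Suc i)) * (1 - L i t))" for t
  have GP: "G (P t) t" if "0 \<le> t" "t \<le> c j" for t
  proof -
    have "G (x 1 + (\<Sum>i=1..<j. (x (Suc i) - x i) *
            (1 - lam (min (c i) (c (Suc i))) (max (c i) (c (Suc i))) t))) t"
    proof (rule walk[of G j x c t])
      show "G xx t'" if "G xx t" "0 \<le> t'" "t' \<le> t" for xx t t' using down that by blast
      show "G ((1-u)*x1 + u*x2) ((1-u)*t1 + u*t2)" if "G x1 t1" "G x2 t2" "0 \<le> u" "u \<le> 1"
        for x1 t1 x2 t2 u using conv that by blast
      show "G (x i) (c i)" if "1 \<le> i" "i \<le> j" for i using base that j by auto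
      show "c i \<le> c (Suc i)" if "1 \<le> i" "i < j" for i using up that by auto
    qed (use j that in auto)
    then show ?thesis by (simp add: P_def L_def)
  qed
  have GQ: "G (Q t) t" if "0 \<le> t" "t \<le> c j" for t
  proof -
    let ?X = "\<lambda>i. x (m + 1 - i)" and ?H = "\<lambda>i. c (m + 1 - i)"
    have "G (?X 1 + (\<Sum>i=1..<m + 1 - j. (?X (Suc i) - ?X i) *
            (1 - lam (min (?H i) (?H (Suc i))) (max (?H i) (?H (Suc i))) t))) t"
    proof (rule walk[of G "m + 1 - j" ?X ?H t])
      show "G xx t'" if "G xx t" "0 \<le> t'" "t' \<le> t" for xx t t' using down that by blast
      show "G ((1-u)*x1 + u*x2) ((1-u)*t1 + u*t2)" if "G x1 t1" "G x2 t2" "0 \<le> u" "u \<le> 1"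
        for x1 t1 x2 t2 u using conv that by blast
      show "G (?X i) (?H i)" if "1 \<le> i" "i \<le> m + 1 - j" for i using base that j by auto
      show "?H i \<le> ?H (Suc i)" if "1 \<le> i" "i < m + 1 - j" for i
      proof -
        have cd: "j \<le> m - i" "m - i \<le> m + 1 - i" "m + 1 - i \<le> m" using that j by auto
        have "c (m + 1 - i) \<le> c (m - i)" using dn cd by blast
        then show ?thesis by (simp add: Suc_diff_Suc)
      qed
    qed (use j that in auto)
    moreover have "(\<Sum>i=1..<m + 1 - j. (?X (Suc i) - ?X i) *
            (1 - lam (min (?H i) (?H (Suc i))) (max (?H i) (?H (Suc i))) t))
         = (\<Sum>i=j..<m. (x i - x (Suc i)) * (1 - L i t))"
    proof (rule sum.reindex_bij_witness[where i="\<lambda>k. m - k" and j="\<lambda>k. m - k"])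
      fix i' assume i': "i' \<in> {1..<m + 1 - j}"
      then have e: "m + 1 - Suc i' = m - i'" "m + 1 - i' = Suc (m - i')" by auto
      show "(x (m - i') - x (Suc (m - i'))) * (1 - L (m - i') t) =
            (?X (Suc i') - ?X i') * (1 - lam (min (?H i') (?H (Suc i'))) (max (?H i') (?H (Suc i'))) t)"
        unfolding e L_def by (simp add: min.commute max.commute)
    qed auto
    ultimately show ?thesis by (simp add: Q_def)
  qed
  have Gx: "G xx t" if "0 \<le> t" "t \<le> c j" "Q t \<le> xx" "xx \<le> P t" for t xx
  proof (cases "P t = Q t")
    case True then show ?thesis using GP[OF that(1,2)] that by simp
  next
    case False
    define u where "u = (xx - Q t) / (P t - Q t)"
    have u: "0 \<le> u" "u \<le> 1" using that False by (auto simp: u_def field_simps)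
    have "G ((1-u)*Q t + u*P t) ((1-u)*t + u*t)" by (rule conv[OF GQ[OF that(1,2)] GP[OF that(1,2)] u])
    moreover have "(1-u)*Q t + u*P t = xx" using False unfolding u_def by (simp add: divide_simps) argo
    ultimately show ?thesis by (simp add: algebra_simps)
  qed
  have PQ: "P t - Q t = (\<Sum>i=1..<m. (x i - x (Suc i)) * L i t)" for t
  proof -
    have s1: "(\<Sum>i=1..<j. (x (Suc i) - x i) * (1 - L i t)) + (\<Sum>i=j..<m. (x (Suc i) - x i) * (1 - L i t))
        = (\<Sum>i=1..<m. (x (Suc i) - x i) * (1 - L i t))"
      using j by (intro sum.atLeastLessThan_concat) auto
    have s2: "(\<Sum>i=j..<m. (x i - x (Suc i)) * (1 - L i t)) = - (\<Sum>i=j..<m. (x (Suc i) - x i) * (1 - L i t))"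
      by (simp add: sum_negf[symmetric] algebra_simps)
    have s3: "(\<Sum>i=1..<m. (x (Suc i) - x i) * (1 - L i t)) =
        (\<Sum>i=1..<m. x (Suc i) - x i) + (\<Sum>i=1..<m. (x i - x (Suc i)) * L i t)"
      by (simp add: sum.distrib[symmetric] algebra_simps)
    have s4: "(\<Sum>i=1..<m. x (Suc i) - x i) = x m - x 1" using m by (simp add: sum_Suc_diff')
    show ?thesis unfolding P_def Q_def using s1 s2 s3 s4 by simp
  qed
  have Lm: "L i \<in> borel_measurable borel" for i unfolding L_def by measurable
  have Pm: "P \<in> borel_measurable borel" unfolding P_def using Lm by measurable
  have Qm: "Q \<in> borel_measurable borel" unfolding Q_def using Lm by measurable
  have meas1: "(\<integral>\<^sup>+t. ennreal (if t \<in> {0..c j} then P t - Q t else 0) \<partial>lborel) \<le> emeasure lborel K"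
    by (rule measure_via_slices[OF Kc Kv Pm Qm]) (use Gx in \<open>auto simp: G_def\<close>)
  define g where "g t = (if t \<in> {0..c j} then P t - Q t else 0)" for t
  have area: "poly_area vs = (\<Sum>i=1..<m. (x i - x (Suc i)) * ((c i + c (Suc i)) / 2))"
  proof -
    have "2 * poly_area vs = (\<Sum>i=1..<m. (x i - x (Suc i)) * (c i + c (Suc i)))"
      unfolding vs_def area_formula[OF m] by (rule vertical_area[OF m abx])
    then show ?thesis by (simp add: sum_divide_distrib[symmetric] algebra_simps)
  qed
  have Lint: "(L i has_integral (c i + c (Suc i)) / 2) {0..c j}" if "i \<in> {1..<m}" for i
  proof -
    have "(L i has_integral (min (c i) (c (Suc i)) + max (c i) (c (Suc i))) / 2) {0..c j}"
      unfolding L_def[abs_def] using that c0 cmax by (intro lam_integral) auto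
    moreover have "min (c i) (c (Suc i)) + max (c i) (c (Suc i)) = c i + c (Suc i)" by simp
    ultimately show ?thesis by simp
  qed
  have "((\<lambda>t. \<Sum>i=1..<m. (x i - x (Suc i)) * L i t) has_integral
          (\<Sum>i=1..<m. (x i - x (Suc i)) * ((c i + c (Suc i)) / 2))) {0..c j}"
    by (intro has_integral_sum has_integral_mult_right Lint) auto
  then have "((\<lambda>t. P t - Q t) has_integral poly_area vs) {0..c j}" by (simp add: PQ area)
  then have gint: "(g has_integral poly_area vs) UNIV"
    unfolding g_def[abs_def] by (subst has_integral_restrict_UNIV)
  have gm: "g \<in> borel_measurable lborel" unfolding g_def using Pm Qm by measurable
  have gL: "integrable lborel g"
  proof (rule integrableI_bounded_set[where A="{0..c j}" and B="\<Sum>i=1..<m. \<bar>x i - x (Suc i)\<bar>"])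
    show "AE t in lborel. t \<in> {0..c j} \<longrightarrow> norm (g t) \<le> (\<Sum>i=1..<m. \<bar>x i - x (Suc i)\<bar>)"
    proof (intro AE_I2 impI)
      fix t assume "t \<in> {0..c j}"
      have "norm (g t) = \<bar>\<Sum>i=1..<m. (x i - x (Suc i)) * L i t\<bar>"
        using \<open>t \<in> {0..c j}\<close> by (simp add: g_def PQ)
      also have "\<dots> \<le> (\<Sum>i=1..<m. \<bar>(x i - x (Suc i)) * L i t\<bar>)" by (rule sum_abs)
      also have "\<dots> \<le> (\<Sum>i=1..<m. \<bar>x i - x (Suc i)\<bar>)"
      proof (intro sum_mono)
        fix i
        have "0 \<le> L i t" "L i t \<le> 1" unfolding L_def using lam_bounds[of "min (c i) (c (Suc i))" "max (c i) (c (Suc i))" t] by auto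
        then show "\<bar>(x i - x (Suc i)) * L i t\<bar> \<le> \<bar>x i - x (Suc i)\<bar>"
          by (simp add: abs_mult mult_left_le)
      qed
      finally show "norm (g t) \<le> (\<Sum>i=1..<m. \<bar>x i - x (Suc i)\<bar>)" .
    qed
    show "AE t in lborel. t \<notin> {0..c j} \<longrightarrow> g t = 0" by (simp add: g_def)
    have "0 \<le> c j" using c0 j by auto
    then show "emeasure lborel {0..c j} < \<infinity>" by simp
  qed (use gm in auto)
  have gI: "integral\<^sup>L lborel g = poly_area vs"
    using has_integral_unique[OF has_integral_integral_lborel[OF gL] gint] .
  have KB: "K \<in> sets borel" using Kc by (simp add: borel_compact)
  have Kfin: "emeasure lborel K \<noteq> top"
    using emeasure_bounded_finite[OF compact_imp_bounded[OF Kc]] by (simp add: infinity_ennreal_def)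
  have "ennreal (poly_area vs) \<le> (\<integral>\<^sup>+t. ennreal (g t) \<partial>lborel)"
    using ennreal_integral_le_nn[OF gL] gI by simp
  also have "\<dots> \<le> emeasure lborel K" using meas1 by (simp add: g_def)
  also have "\<dots> = ennreal (measure lborel K)" by (rule emeasure_eq_ennreal_measure[OF Kfin])
  finally have "ennreal (poly_area vs) \<le> ennreal (measure lborel K)" .
  then have "poly_area vs \<le> measure lborel K"
  proof (cases "poly_area vs \<le> 0")
    case True
    have "0 \<le> measure lborel K" by (rule measure_nonneg)
    then show ?thesis using True by linarith
  next
    case False
    then show ?thesis using \<open>ennreal (poly_area vs) \<le> ennreal (measure lborel K)\<close>
      by (simp add: ennreal_le_iff2)
  qed
  moreover have "measure lebesgue K = measure lborel K" using KB by simp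
  ultimately show ?thesis unfolding Concl_def K_def vs_def by simp
qed


lemma step2:
  assumes m: "1 \<le> m" and h: "HYP m a b (d1, 1) c"
  shows "Concl m a b"
proof -
  let ?f = "\<lambda>p::real\<times>real. (fst p + (- d1) * snd p, snd p)"
  have lin: "linear ?f" by (auto intro!: linearI simp: algebra_simps)
  show ?thesis
  proof (rule transfer[OF lin])
    show "wedge (?f p) (?f q) = wedge p q" for p q by (simp add: wedge_def algebra_simps)
    show "measure lebesgue (?f ` C) = measure lebesgue C" if "compact C" for C
      using shear_h_measure[OF that, of "-d1"] by simp
    have "HYP m (?f \<circ> a) (?f \<circ> b) (?f (d1, 1)) c"
      by (rule hyp_transfer[OF lin _ h]) (simp add: zero_prod_def)
    then show "Concl m (?f \<circ> a) (?f \<circ> b)" using vert_main[OF m] by simp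
  qed
qed

lemma step3:
  assumes m: "1 \<le> m" and h: "HYP m a b d c" and d1: "fst d \<noteq> 0"
  shows "Concl m a b"
proof -
  define k where "k = (1 - snd d) / fst d"
  let ?f = "\<lambda>p::real\<times>real. (fst p, snd p + k * fst p)"
  have lin: "linear ?f" by (auto intro!: linearI simp: algebra_simps)
  have fd: "?f d = (fst d, 1)" using d1 by (simp add: k_def field_simps)
  show ?thesis
  proof (rule transfer[OF lin])
    show "wedge (?f p) (?f q) = wedge p q" for p q by (simp add: wedge_def algebra_simps)
    show "measure lebesgue (?f ` C) = measure lebesgue C" if "compact C" for C
      using shear_v_measure[OF that] by simp
    have "HYP m (?f \<circ> a) (?f \<circ> b) (?f d) c"
      by (rule hyp_transfer[OF lin _ h]) (simp add: fd zero_prod_def)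
    then show "Concl m (?f \<circ> a) (?f \<circ> b)" using step2[OF m] fd by simp
  qed
qed

lemma step4:
  assumes m: "1 \<le> m" and h: "HYP m a b d c"
  shows "Concl m a b"
proof (cases "fst d = 0")
  case False
  then show ?thesis using step3[OF m h] by simp
next
  case True
  have d2: "snd d \<noteq> 0" using h True unfolding HYP_def by (metis prod.collapse zero_prod_def)
  let ?f = "\<lambda>p::real\<times>real. (fst p + 1 * snd p, snd p)"
  have lin: "linear ?f" by (auto intro!: linearI simp: algebra_simps)
  show ?thesis
  proof (rule transfer[OF lin])
    show "wedge (?f p) (?f q) = wedge p q" for p q by (simp add: wedge_def algebra_simps)
    show "measure lebesgue (?f ` C) = measure lebesgue C" if "compact C" for C
      using shear_h_measure[OF that, of 1] by simp
    have "HYP m (?f \<circ> a) (?f \<circ> b) (?f d) c"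
      by (rule hyp_transfer[OF lin _ h]) (use d2 in \<open>simp add: prod_eq_iff\<close>)
    then show "Concl m (?f \<circ> a) (?f \<circ> b)" using step3[OF m] True d2 by simp
  qed
qed


theorem lemma4p2:
  fixes m :: nat and a b :: "nat \<Rightarrow> real \<times> real"
  assumes m: "m \<ge> 1"
    and same_dir: "\<exists>d. d \<noteq> 0 \<and>
        (\<forall>i\<in>{1..m}. \<exists>c. a i - b i = c *\<^sub>R d \<and>
            (c > 0 \<or> (c = 0 \<and> (i = 1 \<or> i = m))))"
    and unimodal: "\<exists>j\<in>{1..m}.
        (\<forall>i k. 1 \<le> i \<and> i \<le> k \<and> k \<le> j \<longrightarrow> norm (a i - b i) \<le> norm (a k - b k)) \<and>
        (\<forall>i k. j \<le> i \<and> i \<le> k \<and> k \<le> m \<longrightarrow> norm (a k - b k) \<le> norm (a i - b i))"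
  shows "poly_area (gamma_vertices m a b)
           \<le> measure lebesgue (convex hull (poly_curve (gamma_vertices m a b)))"
proof -
  obtain d where d: "d \<noteq> 0"
    and dir: "\<forall>i\<in>{1..m}. \<exists>c. a i - b i = c *\<^sub>R d \<and> (c > 0 \<or> (c = 0 \<and> (i = 1 \<or> i = m)))"
    using same_dir by blast
  define c where "c i = (SOME c. a i - b i = c *\<^sub>R d \<and> 0 \<le> c)" for i
  have cp: "a i - b i = c i *\<^sub>R d \<and> 0 \<le> c i" if "i \<in> {1..m}" for i
  proof -
    have "\<exists>c. a i - b i = c *\<^sub>R d \<and> 0 \<le> c" using dir that by force
    then show ?thesis unfolding c_def by (rule someI_ex)
  qed
  have nrm: "norm (a i - b i) = c i * norm d" if "i \<in> {1..m}" for i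
    using cp[OF that] by simp
  have nd: "0 < norm d" using d by simp
  obtain j where j: "j \<in> {1..m}"
    and up: "\<forall>i k. 1 \<le> i \<and> i \<le> k \<and> k \<le> j \<longrightarrow> norm (a i - b i) \<le> norm (a k - b k)"
    and dn: "\<forall>i k. j \<le> i \<and> i \<le> k \<and> k \<le> m \<longrightarrow> norm (a k - b k) \<le> norm (a i - b i)"
    using unimodal by blast
  have up': "c i \<le> c k" if "1 \<le> i \<and> i \<le> k \<and> k \<le> j" for i k
  proof -
    have "i \<in> {1..m}" "k \<in> {1..m}" using that j by auto
    then have "c i * norm d \<le> c k * norm d" using up that nrm by metis
    then show ?thesis using nd by simp
  qed
  have dn': "c k \<le> c i" if "j \<le> i \<and> i \<le> k \<and> k \<le> m" for i k
  proof -
    have "i \<in> {1..m}" "k \<in> {1..m}" using that j by auto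
    then have "c k * norm d \<le> c i * norm d" using dn that nrm by metis
    then show ?thesis using nd by simp
  qed
  have "HYP m a b d c"
    unfolding HYP_def using d cp j up' dn' by blast
  then have "Concl m a b" using step4 m by blast
  then show ?thesis by (simp add: Concl_def)
qed

end
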